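(* Let $m,n,p,q\in\mathbb{R}$ with $m<0$, let $P(t)=t^5+mt^3+nt^2+pt+q$, and set $u=\frac{2\sqrt{-m}}{\sqrt5}$. Then $P$ has at most three roots on each of the half-lines $(u,\infty)$ and $(-\infty,-u)$. *)

theory Defs
  imports Complex_Main
begin

end

theory Submission
  imports Defs
begin

lemma rolle_count_core:
  fixes f f' :: "real \<Rightarrow> real"
  assumes d: "\<And>x. (f has_real_derivative f' x) (at x)"
  shows "finite A \<Longrightarrow> A \<noteq> {} \<Longrightarrow> (\<forall>x\<in>A. f x = 0) \<Longrightarrow>
    \<exists>B. finite B \<and> B \<subseteq> {Min A .. Max A} \<and> (\<forall>x\<in>B. f' x = 0) \<and> card A = card B + 1"
proof (induction "card A" arbitrary: A)
  case 0
  then show ?case by simp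
next
  case (Suc k)
  show ?case
  proof (cases "k = 0")
    case True
    have "card A = 1" using Suc.hyps(2) True by simp
    then obtain a where "A = {a}" by (rule card_1_singletonE)
    then show ?thesis by (intro exI[of _ "{}"]) auto
  next
    case False
    define a where "a = Max A"
    define A' where "A' = A - {a}"
    have aA: "a \<in> A" using Suc a_def by simp
    have cA': "card A' = k" using Suc aA A'_def by simp
    have fA': "finite A'" using Suc A'_def by simp
    have neA': "A' \<noteq> {}" using cA' False by auto
    obtain B' where B': "finite B'" "B' \<subseteq> {Min A' .. Max A'}" "\<forall>x\<in>B'. f' x = 0" "card A' = card B' + 1"
      using Suc.hyps(1)[OF cA'[symmetric] fA' neA'] Suc.prems(3) A'_def by auto
    have mA': "Max A' \<in> A'" using fA' neA' by simp
    have le: "Max A' \<le> a" using mA' A'_def a_def Suc.prems(1) by auto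
    have ne: "Max A' \<noteq> a" using mA' A'_def by auto
    have lt: "Max A' < a" using le ne by simp
    have z1: "f (Max A') = 0" "f a = 0" using mA' aA Suc.prems(3) A'_def by auto
    have cont: "continuous_on {Max A'..a} f"
      using d by (meson DERIV_isCont continuous_at_imp_continuous_on)
    have dif: "\<And>x. f differentiable at x" using d real_differentiable_def by blast
    obtain c where c: "Max A' < c" "c < a" "DERIV f c :> 0"
      using Rolle[OF lt _ cont dif] z1 by auto
    have fc: "f' c = 0" using c(3) d DERIV_unique by blast
    have cB: "c \<notin> B'" using B'(2) c(1) by auto
    have MinA: "Min A \<le> Min A'" using Suc.prems(1) A'_def neA' by (simp add: Min_antimono)
    have "Min A \<le> Max A'" using mA' A'_def Suc.prems(1) by (auto intro: Min_le)
    show ?thesis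
    proof (intro exI[of _ "insert c B'"] conjI)
      show "finite (insert c B')" using B' by simp
      show "insert c B' \<subseteq> {Min A..Max A}"
        using B'(2) MinA c lt \<open>Min A \<le> Max A'\<close> a_def
        by (auto simp: subset_iff)
      show "\<forall>x\<in>insert c B'. f' x = 0" using fc B' by auto
      show "card A = card (insert c B') + 1"
        using cB B' cA' Suc.hyps(2) by simp
    qed
  qed
qed

lemma rolle_count:
  fixes f f' :: "real \<Rightarrow> real"
  assumes d: "\<And>x. (f has_real_derivative f' x) (at x)"
    and S: "\<forall>x\<in>S. \<forall>z\<in>S. \<forall>y. x \<le> y \<and> y \<le> z \<longrightarrow> y \<in> S"
    and A: "finite A" "A \<subseteq> S" "\<forall>x\<in>A. f x = 0"
  shows "\<exists>B. finite B \<and> B \<subseteq> S \<and> (\<forall>x\<in>B. f' x = 0) \<and> card A \<le> card B + 1"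
proof (cases "A = {}")
  case True
  then show ?thesis by (intro exI[of _ "{}"]) auto
next
  case False
  obtain B where B: "finite B" "B \<subseteq> {Min A .. Max A}" "\<forall>x\<in>B. f' x = 0" "card A = card B + 1"
    using rolle_count_core[OF d A(1) False A(3)] by blast
  have "Min A \<in> S" "Max A \<in> S" using A(2) Min_in[OF A(1) False] Max_in[OF A(1) False] by auto
  then have "{Min A .. Max A} \<subseteq> S"
  proof (intro subsetI)
    fix y assume "y \<in> {Min A .. Max A}"
    then have y1: "Min A \<le> y" and y2: "y \<le> Max A" by auto
    show "y \<in> S" using S \<open>Min A \<in> S\<close> \<open>Max A \<in> S\<close> y1 y2 by blast
  qed
  then have "B \<subseteq> S" using B(2) by (rule order_trans[rotated])
  then show ?thesis using B(1,3,4) by (intro exI[of _ B]) simp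
qed

lemma zeros3:
  fixes f f1 f2 f3 :: "real \<Rightarrow> real"
  assumes d0: "\<And>x. (f has_real_derivative f1 x) (at x)"
    and d1: "\<And>x. (f1 has_real_derivative f2 x) (at x)"
    and d2: "\<And>x. (f2 has_real_derivative f3 x) (at x)"
    and S: "\<forall>x\<in>S. \<forall>z\<in>S. \<forall>y. x \<le> y \<and> y \<le> z \<longrightarrow> y \<in> S"
    and nz: "\<And>x. x \<in> S \<Longrightarrow> f3 x \<noteq> 0"
  shows "finite {x. x \<in> S \<and> f x = 0} \<and> card {x. x \<in> S \<and> f x = 0} \<le> 3"
proof -
  have key: "card A \<le> 3" if "finite A" "A \<subseteq> {x. x \<in> S \<and> f x = 0}" for A
  proof -
    have A0: "finite A" using that(1) .
    have A1: "A \<subseteq> S" and A2: "\<forall>x\<in>A. f x = 0" using that(2) by auto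
    obtain B1 where B1: "finite B1" "B1 \<subseteq> S" "\<forall>x\<in>B1. f1 x = 0" "card A \<le> card B1 + 1"
      using rolle_count[of f f1 S A, OF d0 S A0 A1 A2] by (elim exE conjE)
    obtain B2 where B2: "finite B2" "B2 \<subseteq> S" "\<forall>x\<in>B2. f2 x = 0" "card B1 \<le> card B2 + 1"
      using rolle_count[of f1 f2 S B1, OF d1 S B1(1) B1(2) B1(3)] by (elim exE conjE)
    obtain B3 where B3: "finite B3" "B3 \<subseteq> S" "\<forall>x\<in>B3. f3 x = 0" "card B2 \<le> card B3 + 1"
      using rolle_count[of f2 f3 S B2, OF d2 S B2(1) B2(2) B2(3)] by (elim exE conjE)
    have "B3 = {}"
    proof (rule ccontr)
      assume "B3 \<noteq> {}"
      then obtain x where "x \<in> B3" by auto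
      then show False using B3(2,3) nz by auto
    qed
    then show ?thesis using B1(4) B2(4) B3(4) by simp
  qed
  have fin: "finite {x. x \<in> S \<and> f x = 0}"
  proof (rule ccontr)
    assume "infinite {x. x \<in> S \<and> f x = 0}"
    then obtain A where "finite A" "card A = 4" "A \<subseteq> {x. x \<in> S \<and> f x = 0}"
      using infinite_arbitrarily_large by blast
    then have "card A \<le> 3" by (intro key)
    then show False using \<open>card A = 4\<close> by simp
  qed
  show ?thesis using fin key[OF fin] by simp
qed

theorem corollary2:
  fixes m n p q :: real
  assumes "m < 0"
  defines "P \<equiv> (\<lambda>t::real. t^5 + m * t^3 + n * t^2 + p * t + q)"
    and "u \<equiv> 2 * sqrt (- m) / sqrt 5"
  shows "finite {t. t > u \<and> P t = 0} \<and> card {t. t > u \<and> P t = 0} \<le> 3 \<and>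
         finite {t. t < - u \<and> P t = 0} \<and> card {t. t < - u \<and> P t = 0} \<le> 3"
proof -
  have d0: "\<And>x. (P has_real_derivative (5*x^4 + 3*m*x^2 + 2*n*x + p)) (at x)"
    unfolding P_def by (auto intro!: derivative_eq_intros simp: algebra_simps)
  have d1: "\<And>x. ((\<lambda>x. 5*x^4 + 3*m*x^2 + 2*n*x + p) has_real_derivative (20*x^3 + 6*m*x + 2*n)) (at x)"
    by (auto intro!: derivative_eq_intros simp: algebra_simps)
  have d2: "\<And>x. ((\<lambda>x. 20*x^3 + 6*m*x + 2*n) has_real_derivative (60*x^2 + 6*m)) (at x)"
    by (auto intro!: derivative_eq_intros simp: algebra_simps)
  have u0: "u \<ge> 0" unfolding u_def using assms(1) by simp
  have u2: "u^2 = 4 * (-m) / 5" unfolding u_def using assms(1)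
    by (simp add: power_divide power_mult_distrib)
  have pos: "60*x^2 + 6*m \<noteq> 0" if "u^2 < x^2" for x
    using that u2 assms(1) by linarith
  have r: "finite {x. x \<in> {t. t > u} \<and> P x = 0} \<and> card {x. x \<in> {t. t > u} \<and> P x = 0} \<le> 3"
  proof (rule zeros3[OF d0 d1 d2])
    show "\<forall>x\<in>{t. t > u}. \<forall>z\<in>{t. t > u}. \<forall>y. x \<le> y \<and> y \<le> z \<longrightarrow> y \<in> {t. t > u}" by auto
    fix x assume "x \<in> {t. t > u}"
    then have "u^2 < x^2" using u0 by (simp add: power_strict_mono)
    then show "60*x^2 + 6*m \<noteq> 0" by (rule pos)
  qed
  have l: "finite {x. x \<in> {t. t < -u} \<and> P x = 0} \<and> card {x. x \<in> {t. t < -u} \<and> P x = 0} \<le> 3"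
  proof (rule zeros3[OF d0 d1 d2])
    show "\<forall>x\<in>{t. t < -u}. \<forall>z\<in>{t. t < -u}. \<forall>y. x \<le> y \<and> y \<le> z \<longrightarrow> y \<in> {t. t < -u}" by auto
    fix x assume "x \<in> {t. t < -u}"
    then have "u < -x" by simp
    then have "u^2 < (-x)^2" using u0 by (simp only: power_strict_mono)
    then have "u^2 < x^2" by simp
    then show "60*x^2 + 6*m \<noteq> 0" by (rule pos)
  qed
  show ?thesis using r l by simp
qed

end
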